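(* Fix integers $a,b\ge 2$, $\varepsilon>0$, and a family $\mathcal{T}$ of $a$-element multisets with elements in $[b]$. Let $n\to\infty$ and let $m=m(n)$ satisfy $m/n\to\infty$. For each $n$, let $C_M$ be a coloring $[n]\to[b]$ maximizing $p^C(\mathcal{T})$. Then all hypergraphs $H\in\mathcal{H}(a,n,m)$, except for $o\!\left(\binom{\binom{n}{a}}{m}\right)$ of them, satisfy $q(H)\le p^{C_M}(\mathcal{T})\,m\,(1+\varepsilon)$.
   Context: $\mathcal{H}(a,n,m)$ is the family of all $a$-uniform hypergraphs on vertex set $[n]$ with exactly $m$ hyperedges; $|\mathcal{H}(a,n,m)|=\binom{\binom{n}{a}}{m}$. A coloring $C:[n]\to[b]$ is an arbitrary map. For a coloring $C$, $n_j^C$ is the number of vertices of color $j$; the color multiset of a hyperedge $e$ is the multiset of colors $C(v)$, $v\in e$, with multiplicity. For an $a$-element multiset $T$, $I_T(j)$ is the multiplicity of $j$ in $T$ and $p^C(T)=\prod_{j=1}^b\binom{n_j^C}{I_T(j)}\big/\binom{n}{a}$; and $p^C(\mathcal{T})=\sum_{T\in\mathcal{T}}p^C(T)$. For $H\in\mathcal{H}(a,n,m)$, $q(H)$ is the maximum, over all colorings $C:[n]\to[b]$, of the number of hyperedges of $H$ whose color multiset with respect to $C$ belongs to $\mathcal{T}$ (equivalently, the largest number of hyperedges in a subhypergraph of $H$ admitting a $b$-coloring in which every hyperedge's color multiset lies in $\mathcal{T}$). *)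

theory Defs
  imports Complex_Main "HOL-Library.Multiset" "HOL-Library.Landau_Symbols"
begin

definition hypergraphs :: "nat \<Rightarrow> nat \<Rightarrow> nat \<Rightarrow> nat set set set" where
  "hypergraphs a n m = {H. H \<subseteq> {e. e \<subseteq> {1..n} \<and> card e = a} \<and> card H = m}"

text \<open>Colorings [n] -> [b] (values outside [n] are irrelevant).\<close>
definition colorings :: "nat \<Rightarrow> nat \<Rightarrow> (nat \<Rightarrow> nat) set" where
  "colorings n b = {C. \<forall>v\<in>{1..n}. C v \<in> {1..b}}"

definition color_mset :: "(nat \<Rightarrow> nat) \<Rightarrow> nat set \<Rightarrow> nat multiset" where
  "color_mset C e = image_mset C (mset_set e)"

definition class_size :: "nat \<Rightarrow> (nat \<Rightarrow> nat) \<Rightarrow> nat \<Rightarrow> nat" where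
  "class_size n C j = card {v\<in>{1..n}. C v = j}"

definition pT :: "nat \<Rightarrow> nat \<Rightarrow> nat \<Rightarrow> (nat \<Rightarrow> nat) \<Rightarrow> nat multiset \<Rightarrow> real" where
  "pT a b n C T = (\<Prod>j=1..b. real (class_size n C j choose count T j)) / real (n choose a)"

definition pFam :: "nat \<Rightarrow> nat \<Rightarrow> nat \<Rightarrow> (nat \<Rightarrow> nat) \<Rightarrow> nat multiset set \<Rightarrow> real" where
  "pFam a b n C \<T> = (\<Sum>T\<in>\<T>. pT a b n C T)"

definition good_edges :: "(nat \<Rightarrow> nat) \<Rightarrow> nat multiset set \<Rightarrow> nat set set \<Rightarrow> nat" where
  "good_edges C \<T> H = card {e\<in>H. color_mset C e \<in> \<T>}"

definition q :: "nat \<Rightarrow> nat \<Rightarrow> nat multiset set \<Rightarrow> nat set set \<Rightarrow> nat" where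
  "q n b \<T> H = Max {good_edges C \<T> H | C. C \<in> colorings n b}"

end

theory Submission
  imports Defs "HOL-Library.FuncSet"
begin

lemma count_cm: "finite e \<Longrightarrow> count (color_mset C e) j = card {v\<in>e. C v = j}"
proof (induction e rule: finite_induct)
  case empty then show ?case by (simp add: color_mset_def)
next
  case (insert x F)
  have "{v\<in>insert x F. C v = j} = (if C x = j then insert x {v\<in>F. C v = j} else {v\<in>F. C v = j})"
    by auto
  then show ?case using insert by (auto simp: color_mset_def)
qed

lemma fiber_card:
  assumes C: "C \<in> colorings n b"
  shows "card {e. e \<subseteq> {1..n} \<and> card e = a \<and> color_mset C e = T}
     \<le> (\<Prod>j=1..b. class_size n C j choose count T j)"
proof -
  define cl where "cl j = {v\<in>{1..n}. C v = j}" for j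
  define P where "P = (\<Pi>\<^sub>E j\<in>{1..b}. {S. S \<subseteq> cl j \<and> card S = count T j})"
  define f where "f e = (\<lambda>j\<in>{1..b}. {v\<in>e. C v = j})" for e :: "nat set"
  let ?A = "{e. e \<subseteq> {1..n} \<and> card e = a \<and> color_mset C e = T}"
  have "inj_on f ?A"
  proof (rule inj_onI)
    fix x y assume x: "x \<in> ?A" and y: "y \<in> ?A" and fe: "f x = f y"
    show "x = y"
    proof (rule set_eqI)
      fix v
      show "v \<in> x \<longleftrightarrow> v \<in> y"
      proof
        assume v: "v \<in> x"
        then have "v \<in> {1..n}" using x by auto
        then have cv: "C v \<in> {1..b}" using C by (auto simp: colorings_def)
        have "f x (C v) = f y (C v)" using fe by simp
        then have "{w\<in>x. C w = C v} = {w\<in>y. C w = C v}" using cv by (simp add: f_def)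
        then show "v \<in> y" using v by blast
      next
        assume v: "v \<in> y"
        then have "v \<in> {1..n}" using y by auto
        then have cv: "C v \<in> {1..b}" using C by (auto simp: colorings_def)
        have "f x (C v) = f y (C v)" using fe by simp
        then have "{w\<in>x. C w = C v} = {w\<in>y. C w = C v}" using cv by (simp add: f_def)
        then show "v \<in> x" using v by blast
      qed
    qed
  qed
  moreover have "f ` ?A \<subseteq> P"
  proof
    fix z assume "z \<in> f ` ?A"
    then obtain e where e: "e \<in> ?A" and z: "z = f e" by auto
    have fin: "finite e" using e finite_subset[of e "{1..n}"] by auto
    show "z \<in> P" unfolding P_def z f_def
    proof (rule restrict_PiE_iff[THEN iffD2], intro ballI)
      fix j assume "j \<in> {1..b}"
      have "card {v\<in>e. C v = j} = count T j" using count_cm[OF fin, of C j] e by simp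
      moreover have "{v\<in>e. C v = j} \<subseteq> cl j" using e by (auto simp: cl_def)
      ultimately show "{v\<in>e. C v = j} \<in> {S. S \<subseteq> cl j \<and> card S = count T j}" by simp
    qed
  qed
  moreover have "finite P" unfolding P_def
    by (rule finite_PiE) (auto simp: cl_def)
  ultimately have "card ?A \<le> card P" by (meson card_inj_on_le)
  also have "card P = (\<Prod>j=1..b. card {S. S \<subseteq> cl j \<and> card S = count T j})"
    unfolding P_def by (simp add: card_PiE)
  also have "\<dots> = (\<Prod>j=1..b. class_size n C j choose count T j)"
    by (rule prod.cong) (auto simp: n_subsets cl_def class_size_def)
  finally show ?thesis .
qed

lemma good_card:
  assumes C: "C \<in> colorings n b" and fin: "finite \<T>" and an: "a \<le> n"
  shows "real (card {e. e \<subseteq> {1..n} \<and> card e = a \<and> color_mset C e \<in> \<T>})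
     \<le> pFam a b n C \<T> * real (n choose a)"
proof -
  have eq: "{e. e \<subseteq> {1..n} \<and> card e = a \<and> color_mset C e \<in> \<T>}
     = (\<Union>T\<in>\<T>. {e. e \<subseteq> {1..n} \<and> card e = a \<and> color_mset C e = T})" by auto
  have "card {e. e \<subseteq> {1..n} \<and> card e = a \<and> color_mset C e \<in> \<T>}
     \<le> (\<Sum>T\<in>\<T>. card {e. e \<subseteq> {1..n} \<and> card e = a \<and> color_mset C e = T})"
    unfolding eq using fin by (rule card_UN_le)
  also have "\<dots> \<le> (\<Sum>T\<in>\<T>. \<Prod>j=1..b. class_size n C j choose count T j)"
    by (rule sum_mono) (rule fiber_card[OF C])
  finally have "real (card {e. e \<subseteq> {1..n} \<and> card e = a \<and> color_mset C e \<in> \<T>})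
      \<le> real (\<Sum>T\<in>\<T>. \<Prod>j=1..b. class_size n C j choose count T j)" by linarith
  also have "\<dots> = pFam a b n C \<T> * real (n choose a)"
  proof -
    have "real (n choose a) > 0" using an by simp
    then show ?thesis
      by (simp add: pFam_def pT_def sum_distrib_right)
  qed
  finally show ?thesis .
qed

lemma prod_const_mult: "(\<Prod>i = 0..<k. (f i :: real) * c) = (\<Prod>i = 0..<k. f i) * c ^ k"
  by (simp add: prod.distrib)

lemma ratio1:
  assumes "k \<le> x" "x \<le> m"
  shows "real (m choose k) * (real x - real k)^k \<le> real (x choose k) * real m ^ k"
proof -
  have km: "k \<le> m" using assms by simp
  have "real (m choose k) * (real x - real k)^k = (\<Prod>i = 0..<k. real (m - i) / real (k - i) * (real x - real k))"
    by (simp only: prod_const_mult binomial_altdef_of_nat[OF km])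
  also have "\<dots> \<le> (\<Prod>i = 0..<k. real (x - i) / real (k - i) * real m)"
  proof (rule prod_mono, safe)
    fix i assume i: "i \<in> {0..<k}"
    have "0 \<le> real x - real k" using assms by simp
    then show "0 \<le> real (m - i) / real (k - i) * (real x - real k)" by simp
    have key: "real (m - i) * (real x - real k) \<le> real (x - i) * real m"
    proof -
      have "real (m - i) = real m - real i" "real (x - i) = real x - real i" using i assms by auto
      moreover have "real i * (real m - real x + real k) \<le> real k * real m"
      proof -
        have "real i * (real m - real x + real k) \<le> real k * (real m - real x + real k)"
          using i assms by (intro mult_right_mono) auto
        also have "\<dots> \<le> real k * real m"
        proof -
          have "real k * real k \<le> real k * real x" using assms by (simp add: mult_left_mono)
          then show ?thesis by (simp add: algebra_simps)
        qed
        finally show ?thesis .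
      qed
      ultimately show ?thesis by (simp add: algebra_simps)
    qed
    then show "real (m - i) / real (k - i) * (real x - real k) \<le> real (x - i) / real (k - i) * real m"
      using divide_right_mono[OF key, of "real (k - i)"] by (simp only: times_divide_eq_left of_nat_0_le_iff)
  qed
  also have "\<dots> = real (x choose k) * real m ^ k"
    by (subst prod_const_mult, subst binomial_altdef_of_nat[OF assms(1)], rule refl)
  finally show ?thesis .
qed

lemma ratio2:
  assumes "g \<le> N"
  shows "real (g choose k) * real N ^ k \<le> real (N choose k) * real g ^ k"
proof (cases "k \<le> g")
  case False
  have g0: "g choose k = 0" by (rule binomial_eq_0) (use False in linarith)
  show ?thesis by (simp only: g0 of_nat_0 mult_zero_left) (rule mult_nonneg_nonneg; simp)
next
  case True
  then have kN: "k \<le> N" using assms by simp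
  have "real (g choose k) * real N^k = (\<Prod>i = 0..<k. real (g - i) / real (k - i) * real N)"
    by (simp only: prod_const_mult binomial_altdef_of_nat[OF True])
  also have "\<dots> \<le> (\<Prod>i = 0..<k. real (N - i) / real (k - i) * real g)"
  proof (rule prod_mono, safe)
    fix i assume i: "i \<in> {0..<k}"
    show "0 \<le> real (g - i) / real (k - i) * real N" by simp
    have key: "real (g - i) * real N \<le> real (N - i) * real g"
    proof -
      have "real (g - i) = real g - real i" "real (N - i) = real N - real i" using i True kN by auto
      moreover have "real i * real g \<le> real i * real N" using assms by (simp add: mult_left_mono)
      ultimately show ?thesis by (simp add: algebra_simps)
    qed
    then show "real (g - i) / real (k - i) * real N \<le> real (N - i) / real (k - i) * real g"
      using divide_right_mono[OF key, of "real (k - i)"] by (simp only: times_divide_eq_left of_nat_0_le_iff)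
  qed
  also have "\<dots> = real (N choose k) * real g ^ k"
    by (simp only: prod_const_mult binomial_altdef_of_nat[OF kN])
  finally show ?thesis .
qed

lemma double_count:
  assumes E: "finite E" and G: "G \<subseteq> E"
  shows "(\<Sum>H\<in>{H. H \<subseteq> E \<and> card H = m}. card (H \<inter> G) choose k)
     \<le> (card G choose k) * ((card E - k) choose (m - k))"
proof -
  define Hs where "Hs = {H. H \<subseteq> E \<and> card H = m}"
  define Ks where "Ks = {K. K \<subseteq> G \<and> card K = k}"
  have finHs: "finite Hs" unfolding Hs_def by (rule finite_subset[of _ "Pow E"]) (use E in auto)
  have finG: "finite G" using finite_subset[OF G E] .
  have finKs: "finite Ks" unfolding Ks_def by (rule finite_subset[of _ "Pow G"]) (use finG in auto)
  have "(\<Sum>H\<in>Hs. card (H \<inter> G) choose k) = (\<Sum>H\<in>Hs. \<Sum>K\<in>Ks. of_bool (K \<subseteq> H))"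
  proof (rule sum.cong[OF refl])
    fix H assume H: "H \<in> Hs"
    have finH: "finite (H \<inter> G)" using finG by simp
    have "(\<Sum>K\<in>Ks. of_bool (K \<subseteq> H) :: nat) = card (Ks \<inter> {K. K \<subseteq> H})"
      using finKs by (simp only: sum_of_bool_eq of_nat_id)
    also have "Ks \<inter> {K. K \<subseteq> H} = {K. K \<subseteq> H \<inter> G \<and> card K = k}" by (auto simp: Ks_def)
    also have "card \<dots> = card (H \<inter> G) choose k" using n_subsets[OF finH] by simp
    finally show "card (H \<inter> G) choose k = (\<Sum>K\<in>Ks. of_bool (K \<subseteq> H))" by (rule sym)
  qed
  also have "\<dots> = (\<Sum>K\<in>Ks. \<Sum>H\<in>Hs. of_bool (K \<subseteq> H))" by (rule sum.swap)
  also have "\<dots> \<le> (\<Sum>K\<in>Ks. (card E - k) choose (m - k))"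
  proof (rule sum_mono)
    fix K assume K: "K \<in> Ks"
    have KE: "K \<subseteq> E" and cK: "card K = k" using K G by (auto simp: Ks_def)
    have finK: "finite K" using finite_subset[OF KE E] .
    have "(\<Sum>H\<in>Hs. of_bool (K \<subseteq> H) :: nat) = card (Hs \<inter> {H. K \<subseteq> H})"
      using finHs by (simp only: sum_of_bool_eq of_nat_id)
    also have "Hs \<inter> {H. K \<subseteq> H} = {H\<in>Hs. K \<subseteq> H}" by blast
    also have "card \<dots> \<le> card {S. S \<subseteq> E - K \<and> card S = m - k}"
    proof (rule card_inj_on_le[where f = "\<lambda>H. H - K"])
      show "inj_on (\<lambda>H. H - K) {H \<in> Hs. K \<subseteq> H}"
      proof (rule inj_onI)
        fix H1 H2 assume h1: "H1 \<in> {H \<in> Hs. K \<subseteq> H}" and h2: "H2 \<in> {H \<in> Hs. K \<subseteq> H}"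
          and eq: "H1 - K = H2 - K"
        have "H1 = (H1 - K) \<union> K" using h1 by blast
        also have "\<dots> = (H2 - K) \<union> K" using eq by simp
        also have "\<dots> = H2" using h2 by blast
        finally show "H1 = H2" .
      qed
      show "(\<lambda>H. H - K) ` {H \<in> Hs. K \<subseteq> H} \<subseteq> {S. S \<subseteq> E - K \<and> card S = m - k}"
      proof
        fix S assume "S \<in> (\<lambda>H. H - K) ` {H \<in> Hs. K \<subseteq> H}"
        then obtain H where H: "H \<in> Hs" "K \<subseteq> H" and S: "S = H - K" by blast
        have "card (H - K) = card H - card K" using card_Diff_subset[OF finK H(2)] .
        moreover have "card H = m" "H \<subseteq> E" using H(1) unfolding Hs_def by auto
        ultimately have "card S = m - k" "S \<subseteq> E - K" using S cK by auto
        then show "S \<in> {S. S \<subseteq> E - K \<and> card S = m - k}" by simp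
      qed
      show "finite {S. S \<subseteq> E - K \<and> card S = m - k}" by (rule finite_subset[of _ "Pow E"]) (use E in auto)
    qed
    also have "\<dots> = card (E - K) choose (m - k)" using E by (simp add: n_subsets)
    also have "card (E - K) = card E - k" using KE finK cK by (simp add: card_Diff_subset)
    finally show "(\<Sum>H\<in>Hs. of_bool (K \<subseteq> H)) \<le> (card E - k) choose (m - k)" .
  qed
  also have "\<dots> = (card G choose k) * ((card E - k) choose (m - k))"
    using n_subsets[OF finG] by (simp add: Ks_def)
  finally show ?thesis unfolding Hs_def .
qed

lemma bad_bound:
  fixes E G :: "'a set" and p \<epsilon> :: real
  assumes finE: "finite E" and GE: "G \<subseteq> E" and gp: "real (card G) \<le> p * real (card E)"
    and p: "p > 0" and eps: "\<epsilon> > 0" and k: "real k \<le> \<epsilon> * p * real m / 2"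
  shows "real (card {H. H \<subseteq> E \<and> card H = m \<and> real (card (H \<inter> G)) > p * real m * (1+\<epsilon>)}) * (1+\<epsilon>/2)^k
    \<le> real (card E choose m)"
proof -
  define Bad where "Bad = {H. H \<subseteq> E \<and> card H = m \<and> real (card (H \<inter> G)) > p * real m * (1+\<epsilon>)}"
  define Hs where "Hs = {H. H \<subseteq> E \<and> card H = m}"
  define N where "N = card E"
  have finHs: "finite Hs" unfolding Hs_def by (rule finite_subset[of _ "Pow E"]) (use finE in auto)
  have BH: "Bad \<subseteq> Hs" unfolding Bad_def Hs_def by auto
  show ?thesis
  proof (cases "Bad = {}")
    case True then show ?thesis unfolding Bad_def[symmetric] by simp
  next
    case False
    then obtain H0 where H0: "H0 \<in> Bad" by auto
    have xle: "card (H \<inter> G) \<le> m" if "H \<in> Hs" for H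
    proof -
      have "finite H" using that finE finite_subset unfolding Hs_def by blast
      then have "card (H \<inter> G) \<le> card H" by (simp add: card_mono)
      then show ?thesis using that unfolding Hs_def by simp
    qed
    have x0: "real (card (H0 \<inter> G)) \<le> real m" using xle[of H0] H0 BH by auto
    have mpos: "real m > 0"
    proof (rule ccontr)
      assume "\<not> real m > 0"
      then have "m = 0" by simp
      then show False using H0 x0 unfolding Bad_def by simp
    qed
    have pm: "p * real m > 0" using p mpos by simp
    have km: "k \<le> m"
    proof -
      have "real k \<le> \<epsilon> * p * real m / 2" by (rule k)
      also have "\<dots> < p * real m * (1+\<epsilon>)"
      proof -
        have e1: "\<epsilon> * (p * real m) > 0" using pm eps by simp
        have "p * real m * (1+\<epsilon>) = p * real m + \<epsilon> * (p * real m)" by (simp add: algebra_simps)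
        moreover have "\<epsilon> * p * real m / 2 = \<epsilon> * (p * real m) / 2" by simp
        ultimately show ?thesis using e1 pm by linarith
      qed
      also have "\<dots> < real (card (H0 \<inter> G))" using H0 unfolding Bad_def by simp
      finally show ?thesis using x0 by simp
    qed
    have mN: "m \<le> N"
    proof -
      have "H0 \<subseteq> E" using H0 unfolding Bad_def by simp
      then have "card H0 \<le> card E" using finE by (simp add: card_mono)
      then show ?thesis using H0 unfolding Bad_def N_def by simp
    qed
    have Npos: "real N > 0" using mN mpos by simp
    define r where "r = (1 + \<epsilon>/2) * p"
    have rpos: "r > 0" unfolding r_def using p eps by simp
    have each: "real (m choose k) * r ^ k \<le> real (card (H \<inter> G) choose k)" if H: "H \<in> Bad" for H
    proof -
      define x where "x = card (H \<inter> G)"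
      have xm: "x \<le> m" using xle[of H] H BH unfolding x_def by auto
      have xg: "real x > p * real m * (1+\<epsilon>)" using H unfolding Bad_def x_def by simp
      have xk: "real x - real k \<ge> r * real m" unfolding r_def using xg k by (simp add: algebra_simps)
      have kx: "k \<le> x" using xk rpos mpos
        by (smt (verit, ccfv_SIG) mult_pos_pos of_nat_le_iff)
      have "real (m choose k) * r ^ k * real m ^ k = real (m choose k) * (r * real m) ^ k"
        by (simp add: power_mult_distrib)
      also have "\<dots> \<le> real (m choose k) * (real x - real k) ^ k"
        by (intro mult_left_mono power_mono) (use rpos mpos xk in auto)
      also have "\<dots> \<le> real (x choose k) * real m ^ k" by (rule ratio1[OF kx xm])
      finally have "real (m choose k) * r ^ k * real m ^ k \<le> real (x choose k) * real m ^ k" .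
      then show ?thesis unfolding x_def[symmetric] using mpos by simp
    qed
    have "real (card Bad) * (real (m choose k) * r ^ k) = (\<Sum>H\<in>Bad. real (m choose k) * r ^ k)" by simp
    also have "\<dots> \<le> (\<Sum>H\<in>Bad. real (card (H \<inter> G) choose k))" by (rule sum_mono) (rule each)
    also have "\<dots> \<le> (\<Sum>H\<in>Hs. real (card (H \<inter> G) choose k))"
      by (rule sum_mono2[OF finHs BH]) auto
    also have "\<dots> = real (\<Sum>H\<in>Hs. card (H \<inter> G) choose k)" by simp
    also have "\<dots> \<le> real ((card G choose k) * ((N - k) choose (m - k)))"
      unfolding Hs_def N_def using double_count[OF finE GE, where m=m and k=k] by linarith
    also have "\<dots> = real (card G choose k) * real ((N - k) choose (m - k))" by simp
    also have "\<dots> \<le> real (N choose k) * p ^ k * real ((N - k) choose (m - k))"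
    proof (rule mult_right_mono)
      have gN: "card G \<le> N" unfolding N_def using finE GE by (simp add: card_mono)
      have "real (card G choose k) * real N ^ k \<le> real (N choose k) * real (card G) ^ k" by (rule ratio2[OF gN])
      also have "\<dots> \<le> real (N choose k) * (p * real N) ^ k"
        by (intro mult_left_mono power_mono) (use gp in \<open>auto simp: N_def\<close>)
      also have "\<dots> = real (N choose k) * p ^ k * real N ^ k" by (simp add: power_mult_distrib)
      finally show "real (card G choose k) \<le> real (N choose k) * p ^ k" using Npos by simp
    qed simp
    also have "\<dots> = real (N choose m) * (real (m choose k) * p ^ k)"
    proof -
      have "(N choose m) * (m choose k) = (N choose k) * ((N - k) choose (m - k))"
        by (rule choose_mult[OF km mN])
      then have "real (N choose m) * real (m choose k) = real (N choose k) * real ((N - k) choose (m - k))"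
        by (metis of_nat_mult)
      then show ?thesis by (simp add: algebra_simps)
    qed
    finally have main: "real (card Bad) * (real (m choose k) * r ^ k) \<le> real (N choose m) * (real (m choose k) * p ^ k)" .
    have "r ^ k = (1+\<epsilon>/2)^k * p ^ k" unfolding r_def by (simp add: power_mult_distrib)
    then have "(real (card Bad) * (1+\<epsilon>/2)^k) * (real (m choose k) * p ^ k) \<le> real (N choose m) * (real (m choose k) * p ^ k)"
      using main by (simp add: algebra_simps)
    moreover have "real (m choose k) * p ^ k > 0" using km p by simp
    ultimately have "real (card Bad) * (1+\<epsilon>/2)^k \<le> real (N choose m)"
      by (simp only: mult_le_cancel_right_pos)
    then show ?thesis unfolding Bad_def N_def .
  qed
qed

lemma sum_count_size: "finite A \<Longrightarrow> set_mset M \<subseteq> A \<Longrightarrow> (\<Sum>j\<in>A. count M j) = size M"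
proof (induction M)
  case empty then show ?case by simp
next
  case (add x M)
  have xA: "x \<in> A" using add.prems by simp
  have "(\<Sum>j\<in>A. count (add_mset x M) j) = (\<Sum>j\<in>A. count M j + (if j = x then 1 else 0))"
    by (rule sum.cong) auto
  also have "\<dots> = (\<Sum>j\<in>A. count M j) + 1"
    using xA add.prems(1) by (simp add: sum.distrib)
  also have "(\<Sum>j\<in>A. count M j) = size M" using add by auto
  finally show ?case by simp
qed

lemma block_class:
  fixes xs :: "nat list" and L n :: nat
  assumes L: "L \<ge> 1" and aL: "length xs * L \<le> n"
  defines "C \<equiv> (\<lambda>v. if (v - 1) div L < length xs then xs ! ((v - 1) div L) else 1)"
  shows "count_list xs j * L \<le> card {v\<in>{1..n}. C v = j}"
proof -
  define I where "I = {i. i < length xs \<and> xs ! i = j}"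
  define B where "B i = {i * L + 1 .. i * L + L}" for i
  have cI: "card I = count_list xs j"
    unfolding I_def count_list_eq_length_filter length_filter_conv_card by metis
  have sub: "(\<Union>i\<in>I. B i) \<subseteq> {v\<in>{1..n}. C v = j}"
  proof
    fix v assume "v \<in> (\<Union>i\<in>I. B i)"
    then obtain i where i: "i \<in> I" and v: "v \<in> B i" by auto
    have il: "i < length xs" "xs ! i = j" using i by (auto simp: I_def)
    have v1: "i * L + 1 \<le> v" "v \<le> i * L + L" using v by (auto simp: B_def)
    have "(v - 1) div L = i"
    proof (rule div_nat_eqI)
      show "L * i \<le> v - 1" using v1 by (simp add: mult.commute)
      show "v - 1 < L * Suc i" using v1 L by (simp add: algebra_simps)
    qed
    moreover have "v \<le> n"
    proof -
      have "i * L + L = Suc i * L" by simp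
      also have "\<dots> \<le> length xs * L" using il(1) by (intro mult_right_mono) auto
      finally show ?thesis using v1 aL by linarith
    qed
    ultimately show "v \<in> {v\<in>{1..n}. C v = j}" using v1 il by (auto simp: C_def)
  qed
  have disj: "\<forall>i\<in>I. \<forall>i'\<in>I. i \<noteq> i' \<longrightarrow> B i \<inter> B i' = {}"
  proof (intro ballI impI)
    fix i i' assume "i \<in> I" "i' \<in> I" "i \<noteq> i'"
    show "B i \<inter> B i' = {}"
    proof (rule ccontr)
      assume "B i \<inter> B i' \<noteq> {}"
      then obtain v where "v \<in> B i" "v \<in> B i'" by blast
      then have "(v - 1) div L = i" "(v - 1) div L = i'"
        using L by (auto simp: B_def intro!: div_nat_eqI simp: algebra_simps)
      then show False using \<open>i \<noteq> i'\<close> by simp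
    qed
  qed
  have "card (\<Union>i\<in>I. B i) = (\<Sum>i\<in>I. card (B i))"
  proof (rule card_UN_disjoint[OF _ _ disj])
    show "finite I" by (simp add: I_def)
    show "\<forall>i\<in>I. finite (B i)" by (simp add: B_def)
  qed
  also have "\<dots> = card I * L" by (simp add: B_def)
  finally have "card (\<Union>i\<in>I. B i) = count_list xs j * L" using cI by simp
  moreover have "card (\<Union>i\<in>I. B i) \<le> card {v\<in>{1..n}. C v = j}"
    by (rule card_mono[OF _ sub]) simp
  ultimately show ?thesis by simp
qed

lemma p_lower:
  assumes a1: "a \<ge> 1" and T0: "T0 \<in> \<T>" and sz: "size T0 = a" and st: "set_mset T0 \<subseteq> {1..b}"
    and b1: "b \<ge> 1" and fin: "finite \<T>" and n: "2 * a \<le> n"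
  shows "\<exists>C\<in>colorings n b. pFam a b n C \<T> \<ge> (1 / (2 * real a)) ^ a"
proof -
  define xs where "xs = sorted_list_of_multiset T0"
  define L where "L = n div a"
  have mx: "mset xs = T0" unfolding xs_def by simp
  have lx: "length xs = a" using sz mx by (metis size_mset)
  have an: "a \<le> n" using n by simp
  have L1: "L \<ge> 1"
  proof -
    have "a div a \<le> n div a" using an by (rule div_le_mono)
    then show ?thesis using a1 by (simp add: L_def)
  qed
  have aL: "a * L \<le> n" unfolding L_def by (metis div_times_less_eq_dividend mult.commute)
  have nL: "n \<le> 2 * a * L"
  proof -
    have "n = a * L + n mod a" unfolding L_def by simp
    moreover have "n mod a < a" using a1 by simp
    moreover have "a \<le> a * L" using L1 by simp
    ultimately show ?thesis by linarith
  qed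
  define C where "C = (\<lambda>v. if (v - 1) div L < length xs then xs ! ((v - 1) div L) else 1)"
  have Cc: "C \<in> colorings n b"
    unfolding colorings_def
  proof (intro CollectI ballI)
    fix v assume "v \<in> {1..n}"
    show "C v \<in> {1..b}"
    proof (cases "(v - 1) div L < length xs")
      case True
      then have "xs ! ((v - 1) div L) \<in> set xs" by simp
      also have "set xs = set_mset T0" using mx by (metis set_mset_mset)
      finally show ?thesis using True st by (auto simp: C_def)
    next
      case False then show ?thesis using b1 by (simp add: C_def)
    qed
  qed
  have cls: "count T0 j * L \<le> class_size n C j" for j
  proof -
    have "count T0 j = count_list xs j" using mx count_mset by metis
    then show ?thesis unfolding class_size_def C_def
      using block_class[OF L1, of xs n j] aL lx by (simp add: mult.commute)
  qed
  have each: "real L ^ count T0 j \<le> real (class_size n C j choose count T0 j)" for j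
  proof (cases "count T0 j = 0")
    case True then show ?thesis by simp
  next
    case False
    define t where "t = count T0 j"
    have tp: "t > 0" using False by (simp add: t_def)
    have "real L ^ t = (real (t * L) / real t) ^ t" using tp by simp
    also have "\<dots> \<le> real ((t * L) choose t)"
      by (rule binomial_ge_n_over_k_pow_k) (use L1 in simp)
    also have "\<dots> \<le> real (class_size n C j choose t)"
      using binomial_right_mono[OF cls[of j, folded t_def]] by simp
    finally show ?thesis unfolding t_def .
  qed
  have sa: "(\<Sum>j=1..b. count T0 j) = a" using sum_count_size[of "{1..b}" T0] st sz by simp
  have "real L ^ a = real L ^ (\<Sum>j=1..b. count T0 j)" using sa by simp
  also have "\<dots> = (\<Prod>j=1..b. real L ^ count T0 j)" by (rule power_sum)
  also have "\<dots> \<le> (\<Prod>j=1..b. real (class_size n C j choose count T0 j))"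
    by (rule prod_mono) (use each in auto)
  finally have pr: "real L ^ a \<le> (\<Prod>j=1..b. real (class_size n C j choose count T0 j))" .
  have Nle: "real (n choose a) \<le> real n ^ a" using binomial_le_pow[OF an] by (metis of_nat_le_iff of_nat_power)
  have Npos: "real (n choose a) > 0" using an by simp
  have "(1 / (2 * real a)) ^ a \<le> (real L / real n) ^ a"
  proof (rule power_mono)
    have "real n \<le> 2 * real a * real L" using nL by (metis of_nat_le_iff of_nat_mult of_nat_numeral)
    then show "1 / (2 * real a) \<le> real L / real n" using a1 an n
      by (simp add: divide_simps mult.commute)
  qed simp
  also have "\<dots> = real L ^ a / real n ^ a" by (simp add: power_divide)
  also have "\<dots> \<le> (\<Prod>j=1..b. real (class_size n C j choose count T0 j)) / real (n choose a)"
    by (rule frac_le) (use pr Nle Npos in \<open>auto intro: prod_nonneg\<close>)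
  also have "\<dots> = pT a b n C T0" by (simp add: pT_def)
  also have "\<dots> \<le> pFam a b n C \<T>" unfolding pFam_def
    by (rule member_le_sum[OF T0 _ fin]) (auto simp: pT_def intro!: divide_nonneg_nonneg prod_nonneg)
  finally show ?thesis using Cc by blast
qed

lemma cm_restrict: "e \<subseteq> I \<Longrightarrow> finite e \<Longrightarrow> color_mset (restrict C I) e = color_mset C e"
  unfolding color_mset_def by (rule image_mset_cong) auto

lemma per_n:
  fixes \<epsilon> :: real
  assumes an: "a \<le> n" and b1: "b \<ge> 1" and fin: "finite \<T>" and CMc: "CMn \<in> colorings n b"
    and mx: "\<forall>C\<in>colorings n b. pFam a b n C \<T> \<le> pFam a b n CMn \<T>"
    and ppos: "pFam a b n CMn \<T> > 0" and eps: "\<epsilon> > 0"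
    and k: "real k \<le> \<epsilon> * pFam a b n CMn \<T> * real m / 2"
  shows "real (card {H \<in> hypergraphs a n m. real (q n b \<T> H) > pFam a b n CMn \<T> * real m * (1+\<epsilon>)}) * (1+\<epsilon>/2)^k
     \<le> real b ^ n * real ((n choose a) choose m)"
proof -
  define p where "p = pFam a b n CMn \<T>"
  define E where "E = {e. e \<subseteq> {1..n} \<and> card e = a}"
  define GC where "GC C = {e. e \<subseteq> {1..n} \<and> card e = a \<and> color_mset C e \<in> \<T>}" for C
  define BadC where "BadC C = {H. H \<subseteq> E \<and> card H = m \<and> real (card (H \<inter> GC C)) > p * real m * (1+\<epsilon>)}" for C
  define P where "P = (\<Pi>\<^sub>E v\<in>{1..n}. {1..b})"
  define Bad where "Bad = {H \<in> hypergraphs a n m. real (q n b \<T> H) > p * real m * (1+\<epsilon>)}"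
  have finE: "finite E" unfolding E_def by (rule finite_subset[of _ "Pow {1..n}"]) auto
  have cardE: "card E = n choose a" unfolding E_def using n_subsets[of "{1..n}" a] by simp
  have finP: "finite P" unfolding P_def by (rule finite_PiE) auto
  have cardP: "card P = b ^ n" unfolding P_def by (simp add: card_PiE)
  have PC: "C \<in> colorings n b" if "C \<in> P" for C
    using that unfolding P_def colorings_def by (auto simp: PiE_def Pi_def)
  have sub: "Bad \<subseteq> (\<Union>C\<in>P. BadC C)"
  proof
    fix H assume H: "H \<in> Bad"
    have HE: "H \<subseteq> E" and cH: "card H = m" using H unfolding Bad_def hypergraphs_def E_def by auto
    have finH: "finite H" using finite_subset[OF HE finE] .
    define S where "S = {good_edges C \<T> H | C. C \<in> colorings n b}"
    have finS: "finite S"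
    proof (rule finite_subset[of _ "{..card H}"])
      show "S \<subseteq> {..card H}" unfolding S_def good_edges_def
        using finH by (auto intro: card_mono)
    qed simp
    have neS: "S \<noteq> {}"
    proof -
      have "(\<lambda>_. 1) \<in> colorings n b" using b1 by (simp add: colorings_def)
      then show ?thesis unfolding S_def by blast
    qed
    have "q n b \<T> H \<in> S" unfolding q_def S_def[symmetric] using Max_in[OF finS neS] .
    then obtain C where C: "C \<in> colorings n b" and gq: "good_edges C \<T> H = q n b \<T> H"
      unfolding S_def by force
    define C' where "C' = restrict C {1..n}"
    have C'P: "C' \<in> P" unfolding C'_def P_def using C by (auto simp: colorings_def)
    have "H \<inter> GC C' = {e\<in>H. color_mset C e \<in> \<T>}"
    proof (rule set_eqI)
      fix e
      show "e \<in> H \<inter> GC C' \<longleftrightarrow> e \<in> {e\<in>H. color_mset C e \<in> \<T>}"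
      proof (cases "e \<in> H")
        case True
        then have e: "e \<subseteq> {1..n}" "card e = a" using HE by (auto simp: E_def)
        have "finite e" using e(1) finite_subset by blast
        then have "color_mset C' e = color_mset C e" unfolding C'_def using cm_restrict e(1) by blast
        then show ?thesis using True e by (simp add: GC_def)
      next
        case False then show ?thesis by simp
      qed
    qed
    then have "card (H \<inter> GC C') = q n b \<T> H" using gq by (simp add: good_edges_def)
    then have "H \<in> BadC C'" using H HE cH unfolding BadC_def Bad_def by simp
    then show "H \<in> (\<Union>C\<in>P. BadC C)" using C'P by blast
  qed
  have finU: "finite (\<Union>C\<in>P. BadC C)"
    by (rule finite_subset[of _ "Pow E"]) (use finE in \<open>auto simp: BadC_def\<close>)
  have "card Bad \<le> card (\<Union>C\<in>P. BadC C)" by (rule card_mono[OF finU sub])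
  also have "\<dots> \<le> (\<Sum>C\<in>P. card (BadC C))" by (rule card_UN_le[OF finP])
  finally have cB: "real (card Bad) \<le> (\<Sum>C\<in>P. real (card (BadC C)))" by (metis of_nat_le_iff of_nat_sum)
  have each: "real (card (BadC C)) * (1+\<epsilon>/2)^k \<le> real ((n choose a) choose m)" if C: "C \<in> P" for C
  proof -
    have GE: "GC C \<subseteq> E" unfolding GC_def E_def by auto
    have "real (card (GC C)) \<le> pFam a b n C \<T> * real (n choose a)"
      unfolding GC_def by (rule good_card[OF PC[OF C] fin an])
    also have "\<dots> \<le> p * real (card E)"
      unfolding cardE p_def by (rule mult_right_mono) (use mx PC[OF C] in auto)
    finally have gp: "real (card (GC C)) \<le> p * real (card E)" .
    have "real (card (BadC C)) * (1+\<epsilon>/2)^k \<le> real (card E choose m)"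
      unfolding BadC_def by (rule bad_bound[OF finE GE gp]) (use ppos eps k in \<open>auto simp: p_def\<close>)
    then show ?thesis using cardE by simp
  qed
  have "real (card Bad) * (1+\<epsilon>/2)^k \<le> (\<Sum>C\<in>P. real (card (BadC C))) * (1+\<epsilon>/2)^k"
    by (rule mult_right_mono[OF cB]) (use eps in simp)
  also have "\<dots> = (\<Sum>C\<in>P. real (card (BadC C)) * (1+\<epsilon>/2)^k)" by (simp add: sum_distrib_right)
  also have "\<dots> \<le> (\<Sum>C\<in>P. real ((n choose a) choose m))" by (rule sum_mono) (rule each)
  also have "\<dots> = real b ^ n * real ((n choose a) choose m)" using cardP by simp
  finally show ?thesis unfolding Bad_def p_def .
qed

theorem lemma12:
  fixes a b :: nat and \<epsilon> :: real and \<T> :: "nat multiset set"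
    and m :: "nat \<Rightarrow> nat" and CM :: "nat \<Rightarrow> nat \<Rightarrow> nat"
  assumes "a \<ge> 2" and "b \<ge> 2" and "\<epsilon> > 0"
    and "\<forall>T\<in>\<T>. size T = a \<and> set_mset T \<subseteq> {1..b}"
    and "filterlim (\<lambda>n. real (m n) / real n) at_top sequentially"
    and "\<forall>n. CM n \<in> colorings n b \<and>
              (\<forall>C\<in>colorings n b. pFam a b n C \<T> \<le> pFam a b n (CM n) \<T>)"
  shows "(\<lambda>n. real (card {H \<in> hypergraphs a n (m n).
              real (q n b \<T> H) > pFam a b n (CM n) \<T> * real (m n) * (1 + \<epsilon>)}))
         \<in> o(\<lambda>n. real ((n choose a) choose (m n)))"
proof -
  note a2 = assms(1) and b2 = assms(2) and eps = assms(3) and Tprop = assms(4)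
    and lim = assms(5) and CMp = assms(6)
  define f where "f n = real (card {H \<in> hypergraphs a n (m n).
              real (q n b \<T> H) > pFam a b n (CM n) \<T> * real (m n) * (1 + \<epsilon>)})" for n
  define g where "g n = real ((n choose a) choose (m n))" for n
  have finT: "finite \<T>"
  proof (rule finite_subset[of _ "multisets_of_size {1..b} a"])
    show "\<T> \<subseteq> multisets_of_size {1..b} a" using Tprop by (auto simp: multisets_of_size_def)
  qed (rule finite_multisets_of_size, simp)
  show ?thesis
  proof (cases "\<T> = {}")
    case True
    have f0: "f n = 0" for n
    proof -
      have "q n b \<T> H = 0" for H
      proof -
        have "(\<lambda>_. 1) \<in> colorings n b" using b2 by (simp add: colorings_def)
        then have "{good_edges C \<T> H | C. C \<in> colorings n b} = {0}"
          using True by (auto simp: good_edges_def)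
        then show ?thesis by (simp add: q_def)
      qed
      moreover have "pFam a b n (CM n) \<T> = 0" using True by (simp add: pFam_def)
      ultimately show ?thesis unfolding f_def by simp
    qed
    show ?thesis unfolding f_def[symmetric] g_def[symmetric]
      by (rule landau_o.smallI) (simp add: f0)
  next
    case False
    then obtain T0 where T0: "T0 \<in> \<T>" by blast
    define p where "p n = pFam a b n (CM n) \<T>" for n
    define p0 where "p0 = (1 / (2 * real a)) ^ a"
    have p0pos: "p0 > 0" unfolding p0_def using a2 by simp
    have plow: "p n \<ge> p0" if n: "n \<ge> 2 * a" for n
    proof -
      obtain C where C: "C \<in> colorings n b" and pC: "pFam a b n C \<T> \<ge> p0"
        using p_lower[of a T0 \<T> b n] a2 b2 T0 Tprop finT n unfolding p0_def by auto
      then show ?thesis using CMp unfolding p_def by (meson order_trans)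
    qed
    define r where "r = 1 + \<epsilon> / 2"
    have r1: "r > 1" unfolding r_def using eps by simp
    define k where "k n = nat \<lfloor>\<epsilon> * p n * real (m n) / 2\<rfloor>" for n
    have kle: "real (k n) \<le> \<epsilon> * p n * real (m n) / 2" if "n \<ge> 2 * a" for n
    proof -
      have "p n \<ge> 0" using plow[OF that] p0pos by simp
      then have "\<epsilon> * p n * real (m n) / 2 \<ge> 0" using eps by simp
      then show ?thesis unfolding k_def by linarith
    qed
    have kge: "real (k n) \<ge> \<epsilon> * p n * real (m n) / 2 - 1" for n
      unfolding k_def by linarith
    have bound: "f n * r ^ k n \<le> real b ^ n * g n" if n: "n \<ge> 2 * a" for n
    proof -
      have "p n > 0" using plow[OF n] p0pos by simp
      then show ?thesis unfolding f_def g_def r_def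
        using per_n[of a n b \<T> "CM n" \<epsilon> "k n" "m n"] n b2 finT CMp eps kle[OF n]
        unfolding p_def by auto
    qed
    show ?thesis unfolding f_def[symmetric] g_def[symmetric]
    proof (rule landau_o.smallI)
      fix c :: real assume c: "c > 0"
      define \<delta> where "\<delta> = \<epsilon> * p0 / 2"
      have \<delta>pos: "\<delta> > 0" unfolding \<delta>_def using eps p0pos by simp
      define lr where "lr = ln r"
      have lrpos: "lr > 0" unfolding lr_def using r1 by simp
      define M where "M = (ln (real b) + 1) / (\<delta> * lr)"
      have ev1: "eventually (\<lambda>n. real (m n) / real n \<ge> M) sequentially"
        using lim by (simp add: filterlim_at_top)
      define N0 where "N0 = max (2 * a) (nat \<lceil>lr - ln c\<rceil> + 1)"
      have ev2: "eventually (\<lambda>n. n \<ge> N0) sequentially" by (rule eventually_ge_at_top)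
      show "eventually (\<lambda>n. norm (f n) \<le> c * norm (g n)) sequentially"
        using ev1 ev2
      proof eventually_elim
        case (elim n)
        have n2a: "n \<ge> 2 * a" using elim(2) unfolding N0_def by simp
        have npos: "real n > 0" using elim(2) unfolding N0_def by simp
        have nge: "real n \<ge> lr - ln c" using elim(2) unfolding N0_def by linarith
        have mM: "real (m n) \<ge> M * real n" using elim(1) npos by (simp add: field_simps)
        have "real (k n) \<ge> \<delta> * real (m n) - 1"
        proof -
          have "\<epsilon> * p0 * real (m n) \<le> \<epsilon> * p n * real (m n)"
            using plow[OF n2a] eps by (intro mult_right_mono mult_left_mono) auto
          then show ?thesis using kge[of n] unfolding \<delta>_def by simp
        qed
        then have "real (k n) * lr \<ge> (\<delta> * real (m n) - 1) * lr"
          using lrpos by (intro mult_right_mono) auto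
        moreover have "\<delta> * real (m n) * lr \<ge> (ln (real b) + 1) * real n"
        proof -
          have "\<delta> * lr * real (m n) \<ge> \<delta> * lr * (M * real n)"
            using mM \<delta>pos lrpos by (intro mult_left_mono) auto
          also have "\<delta> * lr * (M * real n) = (ln (real b) + 1) * real n"
            unfolding M_def using \<delta>pos lrpos by simp
          finally show ?thesis by (simp add: algebra_simps)
        qed
        ultimately have key: "real n * ln (real b) - real (k n) * lr \<le> ln c"
          using nge by (simp add: algebra_simps)
        have bpos: "real b > 0" using b2 by simp
        have rpos: "r > 0" using r1 by simp
        have "real b ^ n / r ^ k n = exp (real n * ln (real b) - real (k n) * lr)"
          unfolding lr_def using bpos rpos
          by (simp add: exp_diff exp_of_nat_mult)
        also have "\<dots> \<le> exp (ln c)" using key by simp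
        also have "\<dots> = c" using c by simp
        finally have bc: "real b ^ n / r ^ k n \<le> c" .
        have fn: "f n \<ge> 0" "g n \<ge> 0" unfolding f_def g_def by auto
        have rk: "r ^ k n > 0" using rpos by simp
        have "f n \<le> real b ^ n * g n / r ^ k n"
          using bound[OF n2a] rk by (simp add: field_simps)
        also have "\<dots> = (real b ^ n / r ^ k n) * g n" by simp
        also have "\<dots> \<le> c * g n" using bc fn by (intro mult_right_mono) auto
        finally show ?case using fn by simp
      qed
    qed
  qed
qed

end
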